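(* In system $\mathscr{E}$: let $\Phi\triangleright\Gamma\vdash^{(b,e,m,f)}t\{x/u\}:\sigma$. Then there exist derivations $\Phi_t,\Phi_u$, integers $b_t,b_u,e_t,e_u,m_t,m_u,f_t,f_u$, contexts $\Gamma_t,\Gamma_u$ and a multi-type $\mathcal{A}$ such that $\Phi_t\triangleright\Gamma_t;x:\mathcal{A}\vdash^{(b_t,e_t,m_t,f_t)}t:\sigma$, $\Phi_u\triangleright\Gamma_u\vdash^{(b_u,e_u,m_u,f_u)}u:\mathcal{A}$, $b=b_t+b_u$, $e=e_t+e_u$, $m=m_t+m_u$, $f=f_t+f_u$, and $\Gamma=\Gamma_t\wedge\Gamma_u$.
   Context: Pair pattern calculus: patterns $p,q ::= x\mid\langle p,q\rangle$ (linear); $\mathrm{var}(p)$ = variables of $p$; $p\# q$ means disjoint variables. Terms $t,u ::= x\mid\lambda p.t\mid\langle t,u\rangle\mid t\,u\mid t[p/u]$, $\mathrm{var}(p)$ bound in $t$ in $\lambda p.t$ and $t[p/u]$; terms modulo $\alpha$; $t\{x/u\}$ capture-avoiding substitution. System $\mathscr{E}$. Types: tight types $\mathtt{t} ::= \bullet_{\mathcal{N}}\mid\bullet_{\mathcal{M}}$; types $\sigma ::= \mathtt{t}\mid \mathcal{A}_1\times\mathcal{A}_2\mid \mathcal{A}\to\sigma$; multi-types $\mathcal{A} ::= [\sigma_k]_{k\in K}$ (finite, possibly empty $[\,]$). Contexts map variables to multi-types, $\mathrm{dom}(\Gamma)$ = variables with non-empty multi-type; $\Gamma;x:\mathcal{A}$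 extends $\Gamma$ ($x\notin\mathrm{dom}(\Gamma)$) by $x:\mathcal{A}$; $\wedge$ pointwise multiset union; $\Gamma|_p$ restriction to $\mathrm{var}(p)$; $\Gamma\setminus\mathrm{var}(p)$ removal. $\mathrm{tight}(\sigma)$ iff $\sigma\in\{\bullet_{\mathcal{N}},\bullet_{\mathcal{M}}\}$, extended elementwise. Rules: (pat_v) $x:\mathcal{A}\Vdash^{(1,0,0)} x:\mathcal{A}$. (pat_×) from $\Gamma\Vdash^{(e_p,m_p,f_p)}p:\mathcal{A}$, $\Delta\Vdash^{(e_q,m_q,f_q)}q:\mathcal{B}$, $p\#q$ infer $\Gamma\wedge\Delta\Vdash^{(e_p+e_q,1+m_p+m_q,f_p+f_q)}\langle p,q\rangle:[\mathcal{A}\times\mathcal{B}]$. (pat_p) if $\mathrm{dom}(\Gamma)\subseteq\mathrm{var}(\langle p,q\rangle)$ and $\mathrm{tight}(\Gamma)$ then $\Gamma\Vdash^{(0,0,1)}\langle p,q\rangle:[\bullet_{\mathcal{N}}]$. (ax) $x:[\sigma]\vdash^{(0,0,0,0)}x:\sigma$. (abs) from $\Gamma\vdash^{(b,e,m,f)}t:\sigma$ and $\Gamma|_p\Vdash^{(e_p,m_p,f_p)}p:\mathcal{A}$ infer $\Gamma\setminus\mathrm{var}(p)\vdash^{(b+1,e+e_p,m+m_p,f+f_p)}\lambda p.t:\mathcal{A}\to\sigma$. (abs_p) from $\Gamma\vdash^{(b,e,m,f)}t:\mathtt{t}$ ($\mathtt{t}$ tight) and $\mathrm{tight}(\Gamma|_p)$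 infer $\Gamma\setminus\mathrm{var}(p)\vdash^{(b,e,m,f+1)}\lambda p.t:\bullet_{\mathcal{M}}$. (many) from $(\Gamma_k\vdash^{(b_k,e_k,m_k,f_k)}t:\sigma_k)_{k\in K}$ infer $\wedge_k\Gamma_k\vdash^{(\sum b_k,\sum e_k,\sum m_k,\sum f_k)}t:[\sigma_k]_{k\in K}$. (app) from $\Gamma\vdash^{(b_t,e_t,m_t,f_t)}t:\mathcal{A}\to\sigma$, $\Delta\vdash^{(b_u,e_u,m_u,f_u)}u:\mathcal{A}$ infer $\Gamma\wedge\Delta\vdash^{(b_t+b_u,e_t+e_u,m_t+m_u,f_t+f_u)}t\,u:\sigma$. (app_p) from $\Gamma\vdash^{(b,e,m,f)}t:\bullet_{\mathcal{N}}$ infer $\Gamma\vdash^{(b,e,m,f+1)}t\,u:\bullet_{\mathcal{N}}$. (pair) from $\Gamma\vdash^{(b_t,e_t,m_t,f_t)}t:\mathcal{A}$, $\Delta\vdash^{(b_u,e_u,m_u,f_u)}u:\mathcal{B}$ infer $\Gamma\wedge\Delta\vdash^{(b_t+b_u,e_t+e_u,m_t+m_u,f_t+f_u)}\langle t,u\rangle:\mathcal{A}\times\mathcal{B}$. (pair_p) $\vdash^{(0,0,0,1)}\langle t,u\rangle:\bullet_{\mathcal{M}}$. (match) from $\Gamma\vdash^{(b_t,e_t,m_t,f_t)}t:\sigma$, $\Gamma|_p\Vdash^{(e_p,m_p,f_p)}p:\mathcal{A}$, $\Delta\vdash^{(b_u,e_u,m_u,f_u)}u:\mathcal{A}$ infer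 $(\Gamma\setminus\mathrm{var}(p))\wedge\Delta\vdash^{(b_t+b_u,e_t+e_u+e_p,m_t+m_u+m_p,f_t+f_u+f_p)}t[p/u]:\sigma$. *)

theory Defs
  imports Main "HOL-Library.Multiset"
begin

type_synonym var = nat

datatype pat = PVar var | PPair pat pat

datatype trm = Var var | Lam pat trm | Pair trm trm | App trm trm
  | Sub trm pat trm  (* Sub t p u  represents  t[p/u] *)

fun pvars :: "pat \<Rightarrow> var set" where
  "pvars (PVar x) = {x}"
| "pvars (PPair p q) = pvars p \<union> pvars q"

fun linear :: "pat \<Rightarrow> bool" where
  "linear (PVar x) = True"
| "linear (PPair p q) = (linear p \<and> linear q \<and> pvars p \<inter> pvars q = {})"

fun wf_trm :: "trm \<Rightarrow> bool" where
  "wf_trm (Var x) = True"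
| "wf_trm (Lam p t) = (linear p \<and> wf_trm t)"
| "wf_trm (Pair t u) = (wf_trm t \<and> wf_trm u)"
| "wf_trm (App t u) = (wf_trm t \<and> wf_trm u)"
| "wf_trm (Sub t p u) = (wf_trm t \<and> linear p \<and> wf_trm u)"

fun fv :: "trm \<Rightarrow> var set" where
  "fv (Var x) = {x}"
| "fv (Lam p t) = fv t - pvars p"
| "fv (Pair t u) = fv t \<union> fv u"
| "fv (App t u) = fv t \<union> fv u"
| "fv (Sub t p u) = (fv t - pvars p) \<union> fv u"

fun bv :: "trm \<Rightarrow> var set" where
  "bv (Var x) = {}"
| "bv (Lam p t) = pvars p \<union> bv t"
| "bv (Pair t u) = bv t \<union> bv u"
| "bv (App t u) = bv t \<union> bv u"
| "bv (Sub t p u) = bv t \<union> pvars p \<union> bv u"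

(* substitution t{x/u}; it is capture-avoiding whenever bv t \<inter> fv u = {} *)
fun subst :: "trm \<Rightarrow> var \<Rightarrow> trm \<Rightarrow> trm" where
  "subst (Var y) x u = (if y = x then u else Var y)"
| "subst (Lam p t) x u = (if x \<in> pvars p then Lam p t else Lam p (subst t x u))"
| "subst (Pair t1 t2) x u = Pair (subst t1 x u) (subst t2 x u)"
| "subst (App t1 t2) x u = App (subst t1 x u) (subst t2 x u)"
| "subst (Sub t p t2) x u =
     Sub (if x \<in> pvars p then t else subst t x u) p (subst t2 x u)"

(* types: TN = tight N, TM = tight M; multi-types are ty multisets *)
datatype ty = TN | TM | Prod "ty multiset" "ty multiset" | Arr "ty multiset" ty

type_synonym ctx = "var \<Rightarrow> ty multiset"

definition empty_ctx :: ctx where "empty_ctx = (\<lambda>_. {#})"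

definition single_ctx :: "var \<Rightarrow> ty multiset \<Rightarrow> ctx" where
  "single_ctx x A = (\<lambda>y. if y = x then A else {#})"

definition ctx_union :: "ctx \<Rightarrow> ctx \<Rightarrow> ctx" (infixl "\<and>\<^sub>c" 65) where
  "ctx_union G D = (\<lambda>y. G y + D y)"

definition ctx_dom :: "ctx \<Rightarrow> var set" where
  "ctx_dom G = {y. G y \<noteq> {#}}"

definition restrict :: "ctx \<Rightarrow> pat \<Rightarrow> ctx" where
  "restrict G p = (\<lambda>y. if y \<in> pvars p then G y else {#})"

definition remove :: "ctx \<Rightarrow> pat \<Rightarrow> ctx" where
  "remove G p = (\<lambda>y. if y \<in> pvars p then {#} else G y)"

(* G;x:A, defined only when x \<notin> dom G *)
definition ctx_ext :: "ctx \<Rightarrow> var \<Rightarrow> ty multiset \<Rightarrow> ctx" where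
  "ctx_ext G x A = G(x := A)"

definition tight_ty :: "ty \<Rightarrow> bool" where
  "tight_ty s \<longleftrightarrow> s = TN \<or> s = TM"

definition tight_ctx :: "ctx \<Rightarrow> bool" where
  "tight_ctx G \<longleftrightarrow> (\<forall>y. \<forall>s\<in>#G y. tight_ty s)"

inductive pderiv :: "ctx \<Rightarrow> pat \<Rightarrow> ty multiset \<Rightarrow> nat \<Rightarrow> nat \<Rightarrow> nat \<Rightarrow> bool" where
  pat_v: "pderiv (single_ctx x A) (PVar x) A 1 0 0"
| pat_pair: "\<lbrakk>pderiv G p A ep mp fp; pderiv D q B eq mq fq; pvars p \<inter> pvars q = {}\<rbrakk>
    \<Longrightarrow> pderiv (G \<and>\<^sub>c D) (PPair p q) {#Prod A B#} (ep + eq) (1 + mp + mq) (fp + fq)"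
| pat_p: "\<lbrakk>ctx_dom G \<subseteq> pvars (PPair p q); tight_ctx G\<rbrakk>
    \<Longrightarrow> pderiv G (PPair p q) {#TN#} 0 0 1"

inductive tderiv :: "ctx \<Rightarrow> trm \<Rightarrow> ty \<Rightarrow> nat \<Rightarrow> nat \<Rightarrow> nat \<Rightarrow> nat \<Rightarrow> bool"
  and mderiv :: "ctx \<Rightarrow> trm \<Rightarrow> ty multiset \<Rightarrow> nat \<Rightarrow> nat \<Rightarrow> nat \<Rightarrow> nat \<Rightarrow> bool" where
  ax: "tderiv (single_ctx x {#s#}) (Var x) s 0 0 0 0"
| abs: "\<lbrakk>tderiv G t s b e m f; pderiv (restrict G p) p A ep mp fp\<rbrakk>
    \<Longrightarrow> tderiv (remove G p) (Lam p t) (Arr A s) (b + 1) (e + ep) (m + mp) (f + fp)"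
| abs_p: "\<lbrakk>tderiv G t s b e m f; tight_ty s; tight_ctx (restrict G p)\<rbrakk>
    \<Longrightarrow> tderiv (remove G p) (Lam p t) TM b e m (f + 1)"
| app: "\<lbrakk>tderiv G t (Arr A s) bt et mt ft; mderiv D u A bu eu mu fu\<rbrakk>
    \<Longrightarrow> tderiv (G \<and>\<^sub>c D) (App t u) s (bt + bu) (et + eu) (mt + mu) (ft + fu)"
| app_p: "tderiv G t TN b e m f \<Longrightarrow> tderiv G (App t u) TN b e m (f + 1)"
| pair: "\<lbrakk>mderiv G t A bt et mt ft; mderiv D u B bu eu mu fu\<rbrakk>
    \<Longrightarrow> tderiv (G \<and>\<^sub>c D) (Pair t u) (Prod A B) (bt + bu) (et + eu) (mt + mu) (ft + fu)"
| pair_p: "tderiv empty_ctx (Pair t u) TM 0 0 0 1"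
| match: "\<lbrakk>tderiv G t s bt et mt ft; pderiv (restrict G p) p A ep mp fp; mderiv D u A bu eu mu fu\<rbrakk>
    \<Longrightarrow> tderiv (remove G p \<and>\<^sub>c D) (Sub t p u) s (bt + bu) (et + eu + ep) (mt + mu + mp) (ft + fu + fp)"
| many_empty: "mderiv empty_ctx t {#} 0 0 0 0"
| many_add: "\<lbrakk>tderiv G t s b e m f; mderiv D t A b' e' m' f'\<rbrakk>
    \<Longrightarrow> mderiv (G \<and>\<^sub>c D) t (add_mset s A) (b + b') (e + e') (m + m') (f + f')"

end

theory Submission
  imports Defs
begin

lemma relev:
  "tderiv G t s b e m f \<Longrightarrow> G y \<noteq> {#} \<Longrightarrow> y \<in> fv t"
  "mderiv G t M b e m f \<Longrightarrow> G y \<noteq> {#} \<Longrightarrow> y \<in> fv t"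
  by (induction rule: tderiv_mderiv.inducts)
     (auto simp: single_ctx_def remove_def ctx_union_def empty_ctx_def split: if_splits)

lemma mderiv_union:
  "mderiv G t A b e m f \<Longrightarrow> mderiv D t B b' e' m' f' \<Longrightarrow>
   mderiv (G \<and>\<^sub>c D) t (A + B) (b + b') (e + e') (m + m') (f + f')"
proof (induction rule: tderiv_mderiv.inducts(2)[where ?P1.0 = "\<lambda>_ _ _ _ _ _ _. True"])
  case (many_empty t)
  have "empty_ctx \<and>\<^sub>c D = D" by (auto simp: ctx_union_def empty_ctx_def)
  then show ?case using many_empty by simp
next
  case (many_add G t s b e m f D1 A b1 e1 m1 f1)
  have "mderiv (G \<and>\<^sub>c (D1 \<and>\<^sub>c D)) t (add_mset s (A + B)) (b + (b1 + b')) (e + (e1 + e')) (m + (m1 + m')) (f + (f1 + f'))"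
    using many_add by (intro tderiv_mderiv.many_add) auto
  moreover have "G \<and>\<^sub>c (D1 \<and>\<^sub>c D) = (G \<and>\<^sub>c D1) \<and>\<^sub>c D" by (auto simp: ctx_union_def)
  ultimately show ?case by (simp add: add.assoc)
qed auto

definition SPL :: "ctx \<Rightarrow> trm \<Rightarrow> var \<Rightarrow> trm \<Rightarrow> ty \<Rightarrow> nat \<Rightarrow> nat \<Rightarrow> nat \<Rightarrow> nat \<Rightarrow> bool" where
  "SPL G t x u s b e m f \<longleftrightarrow> (\<exists>Gt Gu A bt bu et eu mt mu ft fu.
           Gt x = {#} \<and>
           tderiv (ctx_ext Gt x A) t s bt et mt ft \<and>
           mderiv Gu u A bu eu mu fu \<and>
           b = bt + bu \<and> e = et + eu \<and> m = mt + mu \<and> f = ft + fu \<and>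
           G = Gt \<and>\<^sub>c Gu)"

definition MSPL :: "ctx \<Rightarrow> trm \<Rightarrow> var \<Rightarrow> trm \<Rightarrow> ty multiset \<Rightarrow> nat \<Rightarrow> nat \<Rightarrow> nat \<Rightarrow> nat \<Rightarrow> bool" where
  "MSPL G t x u s b e m f \<longleftrightarrow> (\<exists>Gt Gu A bt bu et eu mt mu ft fu.
           Gt x = {#} \<and>
           mderiv (ctx_ext Gt x A) t s bt et mt ft \<and>
           mderiv Gu u A bu eu mu fu \<and>
           b = bt + bu \<and> e = et + eu \<and> m = mt + mu \<and> f = ft + fu \<and>
           G = Gt \<and>\<^sub>c Gu)"

lemma SPL_I: "Gt x = {#} \<Longrightarrow> tderiv (ctx_ext Gt x A) t s bt et mt ft \<Longrightarrow> mderiv Gu u A bu eu mu fu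
  \<Longrightarrow> b = bt + bu \<Longrightarrow> e = et + eu \<Longrightarrow> m = mt + mu \<Longrightarrow> f = ft + fu \<Longrightarrow> G = Gt \<and>\<^sub>c Gu
  \<Longrightarrow> SPL G t x u s b e m f"
  unfolding SPL_def by blast

lemma MSPL_I: "Gt x = {#} \<Longrightarrow> mderiv (ctx_ext Gt x A) t s bt et mt ft \<Longrightarrow> mderiv Gu u A bu eu mu fu
  \<Longrightarrow> b = bt + bu \<Longrightarrow> e = et + eu \<Longrightarrow> m = mt + mu \<Longrightarrow> f = ft + fu \<Longrightarrow> G = Gt \<and>\<^sub>c Gu
  \<Longrightarrow> MSPL G t x u s b e m f"
  unfolding MSPL_def by blast

lemma ext_union: "Gt1 x = {#} \<Longrightarrow> Gt2 x = {#} \<Longrightarrow>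
  ctx_ext (Gt1 \<and>\<^sub>c Gt2) x (A1 + A2) = ctx_ext Gt1 x A1 \<and>\<^sub>c ctx_ext Gt2 x A2"
  by (auto simp: ctx_ext_def ctx_union_def)

lemma m_from_t:
  assumes "mderiv G v M b e m f"
    and "\<And>G s b e m f. tderiv G v s b e m f \<Longrightarrow> SPL G t x u s b e m f"
  shows "MSPL G t x u M b e m f"
  using assms
proof (induction rule: tderiv_mderiv.inducts(2)[where ?P1.0 = "\<lambda>_ _ _ _ _ _ _. True"])
  case (many_empty v)
  have "mderiv (ctx_ext empty_ctx x {#}) t {#} 0 0 0 0"
    by (metis tderiv_mderiv.many_empty ctx_ext_def empty_ctx_def fun_upd_triv)
  moreover have "empty_ctx = empty_ctx \<and>\<^sub>c empty_ctx" by (auto simp: ctx_union_def empty_ctx_def)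
  ultimately show ?case unfolding MSPL_def
    by (metis add_0 empty_ctx_def tderiv_mderiv.many_empty)
next
  case (many_add G v s b e m f D A b' e' m' f')
  from many_add(1)[THEN many_add(5)] obtain Gt Gu A1 bt bu et eu mt mu ft fu where
    a: "Gt x = {#}" "tderiv (ctx_ext Gt x A1) t s bt et mt ft" "mderiv Gu u A1 bu eu mu fu"
       "b = bt + bu" "e = et + eu" "m = mt + mu" "f = ft + fu" "G = Gt \<and>\<^sub>c Gu"
    unfolding SPL_def by blast
  from many_add obtain Dt Du A2 bt' bu' et' eu' mt' mu' ft' fu' where
    c: "Dt x = {#}" "mderiv (ctx_ext Dt x A2) t A bt' et' mt' ft'" "mderiv Du u A2 bu' eu' mu' fu'"
       "b' = bt' + bu'" "e' = et' + eu'" "m' = mt' + mu'" "f' = ft' + fu'" "D = Dt \<and>\<^sub>c Du"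
    unfolding MSPL_def by blast
  have h1: "mderiv (ctx_ext (Gt \<and>\<^sub>c Dt) x (A1 + A2)) t (add_mset s A) (bt + bt') (et + et') (mt + mt') (ft + ft')"
    using a c by (simp add: ext_union tderiv_mderiv.many_add)
  have h2: "mderiv (Gu \<and>\<^sub>c Du) u (A1 + A2) (bu + bu') (eu + eu') (mu + mu') (fu + fu')"
    using a c mderiv_union by blast
  have h3: "(Gt \<and>\<^sub>c Dt) x = {#}" using a c by (simp add: ctx_union_def)
  have h4: "G \<and>\<^sub>c D = (Gt \<and>\<^sub>c Dt) \<and>\<^sub>c (Gu \<and>\<^sub>c Du)" using a c
    by (auto simp: ctx_union_def)
  show ?case by (rule MSPL_I[OF h3 h1 h2 _ _ _ _ h4]) (use a c in simp_all)
qed auto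

inductive_cases LamE: "tderiv G (Lam p t) s b e m f"
inductive_cases AppE: "tderiv G (App t1 t2) s b e m f"
inductive_cases PairE: "tderiv G (Pair t1 t2) s b e m f"
inductive_cases SubE: "tderiv G (Sub t1 p t2) s b e m f"

lemma nofree:
  assumes "tderiv G t s b e m f" "x \<notin> fv t"
  shows "SPL G t x u s b e m f"
proof -
  have gx: "G x = {#}" using relev(1)[OF assms(1)] assms(2) by blast
  have "ctx_ext G x {#} = G" using gx by (auto simp: ctx_ext_def)
  hence t: "tderiv (ctx_ext G x {#}) t s b e m f" using assms(1) by simp
  have "G = G \<and>\<^sub>c empty_ctx" by (auto simp: ctx_union_def empty_ctx_def)
  then show ?thesis by (intro SPL_I[OF gx t tderiv_mderiv.many_empty]) auto
qed

lemma pat_facts: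
  assumes "Gt x = {#}" "G' = Gt \<and>\<^sub>c Gu" "x \<notin> pvars p" "\<And>y. Gu y \<noteq> {#} \<Longrightarrow> y \<notin> pvars p"
  shows "restrict G' p = restrict (ctx_ext Gt x A) p"
    "remove (ctx_ext Gt x A) p = ctx_ext (remove Gt p) x A"
    "remove G' p = remove Gt p \<and>\<^sub>c Gu"
    "(remove Gt p) x = {#}"
  using assms by (auto simp: fun_eq_iff restrict_def remove_def ctx_ext_def ctx_union_def)

lemma main:
  "bv t \<inter> fv u = {} \<Longrightarrow> tderiv G (subst t x u) s b e m f \<Longrightarrow> SPL G t x u s b e m f"
proof (induction t arbitrary: G s b e m f)
  case (Var y)
  show ?case
  proof (cases "y = x")
    case True
    hence H: "tderiv G u s b e m f" using Var by simp
    have gx: "empty_ctx x = {#}" by (simp add: empty_ctx_def)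
    have "ctx_ext empty_ctx x {#s#} = single_ctx x {#s#}"
      by (auto simp: fun_eq_iff ctx_ext_def empty_ctx_def single_ctx_def)
    hence t: "tderiv (ctx_ext empty_ctx x {#s#}) (Var y) s 0 0 0 0"
      using True tderiv_mderiv.ax by simp
    have "mderiv (G \<and>\<^sub>c empty_ctx) u (add_mset s {#}) (b + 0) (e + 0) (m + 0) (f + 0)"
      by (rule tderiv_mderiv.many_add[OF H tderiv_mderiv.many_empty])
    moreover have "G \<and>\<^sub>c empty_ctx = G" "empty_ctx \<and>\<^sub>c G = G"
      by (auto simp: ctx_union_def empty_ctx_def)
    ultimately show ?thesis by (intro SPL_I[OF gx t]) auto
  next
    case False
    then show ?thesis using Var by (intro nofree) auto
  qed
next
  case (Lam p t)
  show ?case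
  proof (cases "x \<in> pvars p")
    case True
    then show ?thesis using Lam.prems by (intro nofree) auto
  next
    case False
    have bvt: "bv t \<inter> fv u = {}" and pu: "pvars p \<inter> fv u = {}" using Lam.prems by auto
    have H: "tderiv G (Lam p (subst t x u)) s b e m f" using Lam.prems False by simp
    from H show ?thesis
    proof (rule LamE)
      fix G' s' b' e' m' f' A' ep mp fp
      assume eqs: "G = remove G' p" "s = Arr A' s'" "b = Suc b'" "e = e' + ep" "m = m' + mp" "f = f' + fp"
        and d: "tderiv G' (subst t x u) s' b' e' m' f'" "pderiv (restrict G' p) p A' ep mp fp"
      from Lam.IH[OF bvt d(1)] obtain Gt Gu A bt bu et eu mt mu ft fu where
        a: "Gt x = {#}" "tderiv (ctx_ext Gt x A) t s' bt et mt ft" "mderiv Gu u A bu eu mu fu"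
           "b' = bt + bu" "e' = et + eu" "m' = mt + mu" "f' = ft + fu" "G' = Gt \<and>\<^sub>c Gu"
        unfolding SPL_def by blast
      have gu: "\<And>y. Gu y \<noteq> {#} \<Longrightarrow> y \<notin> pvars p" using relev(2)[OF a(3)] pu by blast
      note pf = pat_facts(1-2)[where A=A, OF a(1) a(8) False gu] pat_facts(3-4)[OF a(1) a(8) False gu]
      have t: "tderiv (ctx_ext (remove Gt p) x A) (Lam p t) (Arr A' s') (bt + 1) (et + ep) (mt + mp) (ft + fp)"
        using tderiv_mderiv.abs[OF a(2), of p A' ep mp fp] d(2) pf by simp
      show ?thesis unfolding eqs(2) by (rule SPL_I[OF pf(4) t a(3)]) (use eqs a pf in simp_all)
    next
      fix G' s' f'
      assume eqs: "G = remove G' p" "s = TM" "f = Suc f'"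
        and d: "tderiv G' (subst t x u) s' b e m f'" "tight_ty s'" "tight_ctx (restrict G' p)"
      from Lam.IH[OF bvt d(1)] obtain Gt Gu A bt bu et eu mt mu ft fu where
        a: "Gt x = {#}" "tderiv (ctx_ext Gt x A) t s' bt et mt ft" "mderiv Gu u A bu eu mu fu"
           "b = bt + bu" "e = et + eu" "m = mt + mu" "f' = ft + fu" "G' = Gt \<and>\<^sub>c Gu"
        unfolding SPL_def by blast
      have gu: "\<And>y. Gu y \<noteq> {#} \<Longrightarrow> y \<notin> pvars p" using relev(2)[OF a(3)] pu by blast
      note pf = pat_facts(1-2)[where A=A, OF a(1) a(8) False gu] pat_facts(3-4)[OF a(1) a(8) False gu]
      have t: "tderiv (ctx_ext (remove Gt p) x A) (Lam p t) TM bt et mt (ft + 1)"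
        using tderiv_mderiv.abs_p[OF a(2) d(2), of p] d(3) pf by simp
      show ?thesis unfolding eqs(2) by (rule SPL_I[OF pf(4) t a(3)]) (use eqs a pf in simp_all)
    qed
  qed
next
  case (App t1 t2)
  have bv1: "bv t1 \<inter> fv u = {}" and bv2: "bv t2 \<inter> fv u = {}" using App.prems by auto
  have H: "tderiv G (App (subst t1 x u) (subst t2 x u)) s b e m f" using App.prems by simp
  from H show ?case
  proof (rule AppE)
    fix G1 A' bt' et' mt' ft' D bu' eu' mu' fu'
    assume eqs: "G = G1 \<and>\<^sub>c D" "b = bt' + bu'" "e = et' + eu'" "m = mt' + mu'" "f = ft' + fu'"
      and d: "tderiv G1 (subst t1 x u) (Arr A' s) bt' et' mt' ft'" "mderiv D (subst t2 x u) A' bu' eu' mu' fu'"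
    from App.IH(1)[OF bv1 d(1)] obtain Gt Gu A bt bu et eu mt mu ft fu where
      a: "Gt x = {#}" "tderiv (ctx_ext Gt x A) t1 (Arr A' s) bt et mt ft" "mderiv Gu u A bu eu mu fu"
         "bt' = bt + bu" "et' = et + eu" "mt' = mt + mu" "ft' = ft + fu" "G1 = Gt \<and>\<^sub>c Gu"
      unfolding SPL_def by blast
    from m_from_t[OF d(2) App.IH(2)[OF bv2]] obtain Dt Du A2 bt2 bu2 et2 eu2 mt2 mu2 ft2 fu2 where
      c: "Dt x = {#}" "mderiv (ctx_ext Dt x A2) t2 A' bt2 et2 mt2 ft2" "mderiv Du u A2 bu2 eu2 mu2 fu2"
         "bu' = bt2 + bu2" "eu' = et2 + eu2" "mu' = mt2 + mu2" "fu' = ft2 + fu2" "D = Dt \<and>\<^sub>c Du"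
      unfolding MSPL_def by blast
    have h1: "tderiv (ctx_ext (Gt \<and>\<^sub>c Dt) x (A + A2)) (App t1 t2) s (bt + bt2) (et + et2) (mt + mt2) (ft + ft2)"
      using a c by (simp add: ext_union tderiv_mderiv.app)
    have h2: "mderiv (Gu \<and>\<^sub>c Du) u (A + A2) (bu + bu2) (eu + eu2) (mu + mu2) (fu + fu2)"
      using a c mderiv_union by blast
    have h3: "(Gt \<and>\<^sub>c Dt) x = {#}" using a c by (simp add: ctx_union_def)
    have h4: "G = (Gt \<and>\<^sub>c Dt) \<and>\<^sub>c (Gu \<and>\<^sub>c Du)" using a c eqs
      by (auto simp: ctx_union_def)
    show ?case by (rule SPL_I[OF h3 h1 h2 _ _ _ _ h4]) (use a c eqs in simp_all)
  next
    fix f'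
    assume eqs: "s = TN" "f = Suc f'" and d: "tderiv G (subst t1 x u) TN b e m f'"
    from App.IH(1)[OF bv1 d] obtain Gt Gu A bt bu et eu mt mu ft fu where
      a: "Gt x = {#}" "tderiv (ctx_ext Gt x A) t1 TN bt et mt ft" "mderiv Gu u A bu eu mu fu"
         "b = bt + bu" "e = et + eu" "m = mt + mu" "f' = ft + fu" "G = Gt \<and>\<^sub>c Gu"
      unfolding SPL_def by blast
    have t: "tderiv (ctx_ext Gt x A) (App t1 t2) TN bt et mt (ft + 1)"
      using tderiv_mderiv.app_p[OF a(2)] by simp
    show ?case unfolding eqs(1) by (rule SPL_I[OF a(1) t a(3)]) (use eqs a in simp_all)
  qed
next
  case (Pair t1 t2)
  have bv1: "bv t1 \<inter> fv u = {}" and bv2: "bv t2 \<inter> fv u = {}" using Pair.prems by auto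
  have H: "tderiv G (Pair (subst t1 x u) (subst t2 x u)) s b e m f" using Pair.prems by simp
  from H show ?case
  proof (rule PairE)
    fix G1 A' bt' et' mt' ft' D B' bu' eu' mu' fu'
    assume eqs: "G = G1 \<and>\<^sub>c D" "s = Prod A' B'" "b = bt' + bu'" "e = et' + eu'" "m = mt' + mu'" "f = ft' + fu'"
      and d: "mderiv G1 (subst t1 x u) A' bt' et' mt' ft'" "mderiv D (subst t2 x u) B' bu' eu' mu' fu'"
    from m_from_t[OF d(1) Pair.IH(1)[OF bv1]] obtain Gt Gu A bt bu et eu mt mu ft fu where
      a: "Gt x = {#}" "mderiv (ctx_ext Gt x A) t1 A' bt et mt ft" "mderiv Gu u A bu eu mu fu"
         "bt' = bt + bu" "et' = et + eu" "mt' = mt + mu" "ft' = ft + fu" "G1 = Gt \<and>\<^sub>c Gu"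
      unfolding MSPL_def by blast
    from m_from_t[OF d(2) Pair.IH(2)[OF bv2]] obtain Dt Du A2 bt2 bu2 et2 eu2 mt2 mu2 ft2 fu2 where
      c: "Dt x = {#}" "mderiv (ctx_ext Dt x A2) t2 B' bt2 et2 mt2 ft2" "mderiv Du u A2 bu2 eu2 mu2 fu2"
         "bu' = bt2 + bu2" "eu' = et2 + eu2" "mu' = mt2 + mu2" "fu' = ft2 + fu2" "D = Dt \<and>\<^sub>c Du"
      unfolding MSPL_def by blast
    have h1: "tderiv (ctx_ext (Gt \<and>\<^sub>c Dt) x (A + A2)) (Pair t1 t2) (Prod A' B') (bt + bt2) (et + et2) (mt + mt2) (ft + ft2)"
      using a c by (simp add: ext_union tderiv_mderiv.pair)
    have h2: "mderiv (Gu \<and>\<^sub>c Du) u (A + A2) (bu + bu2) (eu + eu2) (mu + mu2) (fu + fu2)"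
      using a c mderiv_union by blast
    have h3: "(Gt \<and>\<^sub>c Dt) x = {#}" using a c by (simp add: ctx_union_def)
    have h4: "G = (Gt \<and>\<^sub>c Dt) \<and>\<^sub>c (Gu \<and>\<^sub>c Du)" using a c eqs
      by (auto simp: ctx_union_def)
    show ?case unfolding eqs(2) by (rule SPL_I[OF h3 h1 h2 _ _ _ _ h4]) (use a c eqs in simp_all)
  next
    assume eqs: "G = empty_ctx" "s = TM" "b = 0" "e = 0" "m = 0" "f = Suc 0"
    have gx: "empty_ctx x = {#}" by (simp add: empty_ctx_def)
    have "ctx_ext empty_ctx x {#} = empty_ctx" by (auto simp: fun_eq_iff ctx_ext_def empty_ctx_def)
    hence t: "tderiv (ctx_ext empty_ctx x {#}) (Pair t1 t2) TM 0 0 0 1"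
      using tderiv_mderiv.pair_p by simp
    have "empty_ctx \<and>\<^sub>c empty_ctx = empty_ctx" by (auto simp: ctx_union_def empty_ctx_def)
    then show ?case unfolding eqs(2) by (intro SPL_I[OF gx t tderiv_mderiv.many_empty]) (use eqs in auto)
  qed
next
  case (Sub t1 p t2)
  have bv1: "bv t1 \<inter> fv u = {}" and bv2: "bv t2 \<inter> fv u = {}" and pu: "pvars p \<inter> fv u = {}"
    using Sub.prems by auto
  have H: "tderiv G (Sub (if x \<in> pvars p then t1 else subst t1 x u) p (subst t2 x u)) s b e m f"
    using Sub.prems by simp
  from H show ?case
  proof (rule SubE)
    fix G1 bt' et' mt' ft' A' ep mp fp D bu' eu' mu' fu'
    assume eqs: "G = remove G1 p \<and>\<^sub>c D" "b = bt' + bu'" "e = et' + eu' + ep" "m = mt' + mu' + mp" "f = ft' + fu' + fp"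
      and d: "tderiv G1 (if x \<in> pvars p then t1 else subst t1 x u) s bt' et' mt' ft'"
             "pderiv (restrict G1 p) p A' ep mp fp" "mderiv D (subst t2 x u) A' bu' eu' mu' fu'"
    from m_from_t[OF d(3) Sub.IH(2)[OF bv2]] obtain Dt Du A2 bt2 bu2 et2 eu2 mt2 mu2 ft2 fu2 where
      c: "Dt x = {#}" "mderiv (ctx_ext Dt x A2) t2 A' bt2 et2 mt2 ft2" "mderiv Du u A2 bu2 eu2 mu2 fu2"
         "bu' = bt2 + bu2" "eu' = et2 + eu2" "mu' = mt2 + mu2" "fu' = ft2 + fu2" "D = Dt \<and>\<^sub>c Du"
      unfolding MSPL_def by blast
    show ?case
    proof (cases "x \<in> pvars p")
      case True
      have d1: "tderiv G1 t1 s bt' et' mt' ft'" using d(1) True by simp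
      have rx: "(remove G1 p) x = {#}" using True by (simp add: remove_def)
      have ce: "ctx_ext (remove G1 p \<and>\<^sub>c Dt) x A2 = remove G1 p \<and>\<^sub>c ctx_ext Dt x A2"
        using rx by (auto simp: fun_eq_iff ctx_ext_def ctx_union_def)
      have t: "tderiv (ctx_ext (remove G1 p \<and>\<^sub>c Dt) x A2) (Sub t1 p t2) s (bt' + bt2) (et' + et2 + ep) (mt' + mt2 + mp) (ft' + ft2 + fp)"
        unfolding ce by (rule tderiv_mderiv.match[OF d1 d(2) c(2)])
      have h3: "(remove G1 p \<and>\<^sub>c Dt) x = {#}" using rx c by (simp add: ctx_union_def)
      have h4: "G = (remove G1 p \<and>\<^sub>c Dt) \<and>\<^sub>c Du" using c eqs by (auto simp: ctx_union_def)
      show ?thesis by (rule SPL_I[OF h3 t c(3) _ _ _ _ h4]) (use c eqs in simp_all)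
    next
      case False
      have d1: "tderiv G1 (subst t1 x u) s bt' et' mt' ft'" using d(1) False by simp
      from Sub.IH(1)[OF bv1 d1] obtain Gt Gu A bt bu et eu mt mu ft fu where
        a: "Gt x = {#}" "tderiv (ctx_ext Gt x A) t1 s bt et mt ft" "mderiv Gu u A bu eu mu fu"
           "bt' = bt + bu" "et' = et + eu" "mt' = mt + mu" "ft' = ft + fu" "G1 = Gt \<and>\<^sub>c Gu"
        unfolding SPL_def by blast
      have gu: "\<And>y. Gu y \<noteq> {#} \<Longrightarrow> y \<notin> pvars p" using relev(2)[OF a(3)] pu by blast
      note pf = pat_facts(1-2)[where A=A, OF a(1) a(8) False gu] pat_facts(3-4)[OF a(1) a(8) False gu]
      have t0: "tderiv (remove (ctx_ext Gt x A) p \<and>\<^sub>c ctx_ext Dt x A2) (Sub t1 p t2) s (bt + bt2) (et + et2 + ep) (mt + mt2 + mp) (ft + ft2 + fp)"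
        using tderiv_mderiv.match[OF a(2) _ c(2)] d(2) pf(1) by simp
      have ce: "remove (ctx_ext Gt x A) p \<and>\<^sub>c ctx_ext Dt x A2 = ctx_ext (remove Gt p \<and>\<^sub>c Dt) x (A + A2)"
        using pf(2) pf(4) c(1) ext_union by simp
      have h1: "tderiv (ctx_ext (remove Gt p \<and>\<^sub>c Dt) x (A + A2)) (Sub t1 p t2) s (bt + bt2) (et + et2 + ep) (mt + mt2 + mp) (ft + ft2 + fp)"
        using t0 ce by simp
      have h2: "mderiv (Gu \<and>\<^sub>c Du) u (A + A2) (bu + bu2) (eu + eu2) (mu + mu2) (fu + fu2)"
        using a c mderiv_union by blast
      have h3: "(remove Gt p \<and>\<^sub>c Dt) x = {#}" using pf(4) c by (simp add: ctx_union_def)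
      have h4: "G = (remove Gt p \<and>\<^sub>c Dt) \<and>\<^sub>c (Gu \<and>\<^sub>c Du)" using c eqs pf(3)
        by (auto simp: ctx_union_def)
      show ?thesis by (rule SPL_I[OF h3 h1 h2 _ _ _ _ h4]) (use a c eqs in simp_all)
    qed
  qed
qed


theorem lemma8:
  assumes "wf_trm t" and "wf_trm u"
    and "bv t \<inter> fv u = {}"
    and "tderiv G (subst t x u) s b e m f"
  shows "\<exists>Gt Gu A bt bu et eu mt mu ft fu.
           Gt x = {#} \<and>
           tderiv (ctx_ext Gt x A) t s bt et mt ft \<and>
           mderiv Gu u A bu eu mu fu \<and>
           b = bt + bu \<and> e = et + eu \<and> m = mt + mu \<and> f = ft + fu \<and>
           G = Gt \<and>\<^sub>c Gu"
  using main[OF assms(3,4)] unfolding SPL_def .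

end
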